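(* For a generic implicit system on the plane with locally bounded derivatives, no critical point of its folding lies in the zero section of the tangent bundle $T\mathbb{R}^2$. In particular, near each critical point of the folding the 1-folding of the system is well defined.
   Context: An implicit system on the plane is given by a smooth map $F: T\mathbb{R}^2\to\mathbb{R}^2$; its system surface is $F^{-1}(0)$, and its folding is the restriction to the system surface of the bundle projection $T\mathbb{R}^2\to\mathbb{R}^2$; it has locally bounded derivatives if the folding is proper. The 1-folding is the restriction to the system surface (away from the zero section) of the projectivization map $T\mathbb{R}^2\setminus\{0\}\to PT\mathbb{R}^2$ sending a nonzero vector to its direction. "Generic" means belonging to some open dense subset, in the Whitney fine $C^\infty$ topology, of the space of such maps $F$. *)

theory Defs
  imports "HOL-Analysis.Analysis"
begin

fun pD :: "('a::euclidean_space \<Rightarrow> 'b::real_normed_vector) \<Rightarrow> 'a list \<Rightarrow> 'a \<Rightarrow> 'b" where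
  "pD f [] = f"
| "pD f (u # us) = (\<lambda>x. vector_derivative (\<lambda>t. pD f us (x + t *\<^sub>R u)) (at 0))"

definition smooth_map :: "('a::euclidean_space \<Rightarrow> 'b::real_normed_vector) \<Rightarrow> bool" where
  "smooth_map f \<longleftrightarrow> (\<forall>us. set us \<subseteq> Basis \<longrightarrow>
      continuous_on UNIV (pD f us) \<and>
      (\<forall>u\<in>Basis. \<forall>x. (\<lambda>t. pD f us (x + t *\<^sub>R u)) differentiable (at (0::real))))"

text \<open>Basic neighbourhoods of the Whitney C^k topology (k arbitrary: Whitney C-infinity).\<close>
definition whitney_nbhd ::
  "('a::euclidean_space \<Rightarrow> 'b::real_normed_vector) \<Rightarrow> nat \<Rightarrow> ('a \<Rightarrow> real) \<Rightarrow> ('a \<Rightarrow> 'b) set" where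
  "whitney_nbhd f k \<delta> = {g. smooth_map g \<and>
      (\<forall>us x. set us \<subseteq> Basis \<and> length us \<le> k \<longrightarrow> norm (pD g us x - pD f us x) < \<delta> x)}"

definition whitney_open :: "('a::euclidean_space \<Rightarrow> 'b::real_normed_vector) set \<Rightarrow> bool" where
  "whitney_open U \<longleftrightarrow> U \<subseteq> {f. smooth_map f} \<and>
     (\<forall>f\<in>U. \<exists>k \<delta>. continuous_on UNIV \<delta> \<and> (\<forall>x. 0 < \<delta> x) \<and> whitney_nbhd f k \<delta> \<subseteq> U)"

definition whitney_dense :: "('a::euclidean_space \<Rightarrow> 'b::real_normed_vector) set \<Rightarrow> bool" where
  "whitney_dense U \<longleftrightarrow> (\<forall>f k \<delta>. smooth_map f \<and> continuous_on UNIV \<delta> \<and> (\<forall>x. 0 < \<delta> x) \<longrightarrow>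
      whitney_nbhd f k \<delta> \<inter> U \<noteq> {})"

definition generic :: "(('a::euclidean_space \<Rightarrow> 'b::real_normed_vector) \<Rightarrow> bool) \<Rightarrow> bool" where
  "generic P \<longleftrightarrow> (\<exists>U. whitney_open U \<and> whitney_dense U \<and> (\<forall>F\<in>U. P F))"

text \<open>Implicit systems on the plane: T R^2 = R^2 x R^2, points (x, v).\<close>
type_synonym implicit_system = "(real^2) \<times> (real^2) \<Rightarrow> real^2"

definition system_surface :: "implicit_system \<Rightarrow> ((real^2) \<times> (real^2)) set" where
  "system_surface F = {p. F p = 0}"

definition zero_section :: "((real^2) \<times> (real^2)) set" where
  "zero_section = {p. snd p = 0}"

text \<open>Locally bounded derivatives: the folding (restriction of fst to the system surface) is proper.\<close>
definition locally_bounded_derivatives :: "implicit_system \<Rightarrow> bool" where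
  "locally_bounded_derivatives F \<longleftrightarrow>
     (\<forall>K. compact K \<longrightarrow> compact (system_surface F \<inter> fst -` K))"

text \<open>Critical point of the folding: a point of the system surface where the surface is
  smooth (dF surjective) and the differential of the projection restricted to the tangent
  plane ker dF is not surjective.\<close>
definition folding_critical :: "implicit_system \<Rightarrow> (real^2) \<times> (real^2) \<Rightarrow> bool" where
  "folding_critical F p \<longleftrightarrow> p \<in> system_surface F \<and>
     (\<exists>L. (F has_derivative L) (at p) \<and> surj L \<and> fst ` {w. L w = 0} \<noteq> UNIV)"

end

theory Submission
  imports Defs "HOL-Computational_Algebra.Polynomial"
begin

lemma pD_append: "pD (pD f vs) us = pD f (us @ vs)"
  by (induction us) auto

declare pD.simps(2)[simp del]

lemma pD_single: "pD f [u] = (\<lambda>x. vector_derivative (\<lambda>t. f (x + t *\<^sub>R u)) (at 0))"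
  by (simp add: pD.simps)

lemma smooth_map_pD: "smooth_map f \<Longrightarrow> set vs \<subseteq> Basis \<Longrightarrow> smooth_map (pD f vs)"
  unfolding smooth_map_def pD_append by auto

lemma smooth_map_cont: "smooth_map f \<Longrightarrow> continuous_on UNIV f"
  unfolding smooth_map_def by (metis empty_subsetI list.set(1) pD.simps(1))

lemma smooth_map_diff: "smooth_map f \<Longrightarrow> u \<in> Basis \<Longrightarrow> (\<lambda>t. f (x + t *\<^sub>R u)) differentiable (at (0::real))"
  unfolding smooth_map_def by (metis empty_subsetI list.set(1) pD.simps(1))

lemma smooth_map_has:
  "smooth_map f \<Longrightarrow> u \<in> Basis \<Longrightarrow> ((\<lambda>t. f (x + t *\<^sub>R u)) has_vector_derivative pD f [u] x) (at 0)"
  using smooth_map_diff[of f u x] by (simp add: vector_derivative_works pD_single)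

lemma pD_single_eq: "((\<lambda>t. g (x + t *\<^sub>R u)) has_vector_derivative d) (at 0) \<Longrightarrow> pD g [u] x = d"
  by (simp add: vector_derivative_at pD_single)

lemma smooth_map_coinduct:
  assumes "X f"
    and cont: "\<And>g. X g \<Longrightarrow> continuous_on UNIV g"
    and diff: "\<And>g u x. X g \<Longrightarrow> u \<in> Basis \<Longrightarrow> (\<lambda>t. g (x + t *\<^sub>R u)) differentiable (at (0::real))"
    and step: "\<And>g u. X g \<Longrightarrow> u \<in> Basis \<Longrightarrow> X (pD g [u])"
  shows "smooth_map f"
proof -
  have X: "X (pD f us)" if "set us \<subseteq> Basis" for us
    using that
  proof (induction us)
    case Nil then show ?case using assms(1) by simp
  next
    case (Cons u us)
    then have "X (pD (pD f us) [u])" using step by auto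
    then show ?case by (simp add: pD_append)
  qed
  show ?thesis unfolding smooth_map_def using X cont diff by blast
qed

inductive cl :: "(('a::euclidean_space \<Rightarrow> 'b::real_normed_vector) \<Rightarrow> bool) \<Rightarrow> ('a \<Rightarrow> 'b) \<Rightarrow> bool"
  for X where
  cl_base: "X g \<Longrightarrow> cl X g"
| cl_smooth: "smooth_map g \<Longrightarrow> cl X g"
| cl_add: "cl X g \<Longrightarrow> cl X h \<Longrightarrow> cl X (\<lambda>x. g x + h x)"
| cl_smul: "smooth_map (e::'a \<Rightarrow> real) \<Longrightarrow> cl X g \<Longrightarrow> cl X (\<lambda>x. e x *\<^sub>R g x)"

lemma cl_props:
  assumes "cl X f"
   and H: "\<And>g. X g \<Longrightarrow> continuous_on UNIV g \<and> (\<forall>u\<in>Basis. \<forall>x. ((\<lambda>t. g (x + t *\<^sub>R u)) differentiable (at 0)))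
              \<and> (\<forall>u\<in>Basis. cl X (pD g [u]))"
  shows "continuous_on UNIV f \<and> (\<forall>u\<in>Basis. \<forall>x. ((\<lambda>t. f (x + t *\<^sub>R u)) differentiable (at 0)))
              \<and> (\<forall>u\<in>Basis. cl X (pD f [u]))"
  using assms(1)
proof (induction rule: cl.induct)
  case (cl_base g)
  then show ?case using H by blast
next
  case (cl_smooth g)
  then show ?case using smooth_map_cont smooth_map_diff smooth_map_pD[of g "[u]" for u]
    by (auto intro: cl.cl_smooth)
next
  case (cl_add g h)
  have c: "continuous_on UNIV (\<lambda>x. g x + h x)" using cl_add by (auto intro: continuous_on_add)
  have d: "((\<lambda>t. g (x + t *\<^sub>R u) + h (x + t *\<^sub>R u)) has_vector_derivative (pD g [u] x + pD h [u] x)) (at 0)"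
    if "u \<in> Basis" for u x
  proof -
    have "((\<lambda>t. g (x + t *\<^sub>R u)) has_vector_derivative (pD g [u] x)) (at 0)"
      using cl_add that by (simp add: vector_derivative_works pD_single)
    moreover have "((\<lambda>t. h (x + t *\<^sub>R u)) has_vector_derivative (pD h [u] x)) (at 0)"
      using cl_add that by (simp add: vector_derivative_works pD_single)
    ultimately show ?thesis by (rule has_vector_derivative_add)
  qed
  have e: "pD (\<lambda>x. g x + h x) [u] = (\<lambda>x. pD g [u] x + pD h [u] x)" if "u \<in> Basis" for u
    using pD_single_eq[OF d[OF that]] by auto
  show ?case using c d e cl_add by (auto intro: cl.cl_add differentiableI_vector)
next
  case (cl_smul e g)
  have c: "continuous_on UNIV (\<lambda>x. e x *\<^sub>R g x)" using cl_smul smooth_map_cont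
    by (auto intro: continuous_on_scaleR)
  have d: "((\<lambda>t. e (x + t *\<^sub>R u) *\<^sub>R g (x + t *\<^sub>R u)) has_vector_derivative
      (e x *\<^sub>R pD g [u] x + pD e [u] x *\<^sub>R g x)) (at 0)"
    if "u \<in> Basis" for u x
  proof -
    have "((\<lambda>t. g (x + t *\<^sub>R u)) has_vector_derivative (pD g [u] x)) (at 0)"
      using cl_smul that by (simp add: vector_derivative_works pD_single)
    moreover have "((\<lambda>t. e (x + t *\<^sub>R u)) has_field_derivative (pD e [u] x)) (at 0)"
      using smooth_map_has[OF cl_smul(1) that, of x] by (simp add: has_real_derivative_iff_has_vector_derivative)
    ultimately show ?thesis using has_vector_derivative_scaleR by fastforce
  qed
  have e: "pD (\<lambda>x. e x *\<^sub>R g x) [u] = (\<lambda>x. e x *\<^sub>R pD g [u] x + pD e [u] x *\<^sub>R g x)" if "u \<in> Basis" for u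
    using pD_single_eq[OF d[OF that]] by auto
  have "cl X (\<lambda>x. e x *\<^sub>R pD g [u] x + pD e [u] x *\<^sub>R g x)" if "u \<in> Basis" for u
    using cl_smul that smooth_map_pD[of e "[u]"]
    by (auto intro!: cl.cl_add cl.cl_smul)
  then show ?case using c d e by (auto intro: differentiableI_vector)
qed

lemma cl_smooth_map:
  assumes "cl X f"
   and H: "\<And>g. X g \<Longrightarrow> continuous_on UNIV g \<and> (\<forall>u\<in>Basis. \<forall>x. ((\<lambda>t. g (x + t *\<^sub>R u)) differentiable (at 0)))
              \<and> (\<forall>u\<in>Basis. cl X (pD g [u]))"
  shows "smooth_map f"
  apply (rule smooth_map_coinduct[where X="cl X"])
  using assms(1) cl_props[OF _ H] by blast+

lemma smooth_add: "smooth_map f \<Longrightarrow> smooth_map g \<Longrightarrow> smooth_map (\<lambda>x. f x + g x)"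
  by (rule cl_smooth_map[where X="\<lambda>_. False"]) (auto intro: cl.intros)

lemma smooth_smul: "smooth_map (e::_\<Rightarrow>real) \<Longrightarrow> smooth_map g \<Longrightarrow> smooth_map (\<lambda>x. e x *\<^sub>R g x)"
  by (rule cl_smooth_map[where X="\<lambda>_. False"]) (auto intro: cl.intros)

lemma smooth_mult: "smooth_map (e::_\<Rightarrow>real) \<Longrightarrow> smooth_map g \<Longrightarrow> smooth_map (\<lambda>x. e x * g x)"
  using smooth_smul[of e g] by simp

lemma smooth_const: "smooth_map (\<lambda>x. c)"
proof (rule cl_smooth_map[where X="\<lambda>g. \<exists>c. g = (\<lambda>x. c)"])
  fix g :: "'a \<Rightarrow> 'b" assume "\<exists>c. g = (\<lambda>x. c)"
  then obtain c where g: "g = (\<lambda>x. c)" by auto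
  have "pD g [u] = (\<lambda>x. 0)" for u
    using pD_single_eq[of g _ u 0] g by auto
  then show "continuous_on UNIV g \<and> (\<forall>u\<in>Basis. \<forall>x. ((\<lambda>t. g (x + t *\<^sub>R u)) differentiable (at 0)))
              \<and> (\<forall>u\<in>Basis. cl (\<lambda>g. \<exists>c. g = (\<lambda>x. c)) (pD g [u]))"
    using g by (auto intro: cl.intros)
qed (auto intro: cl.intros)

lemma smooth_linear: assumes "bounded_linear L" shows "smooth_map L"
proof (rule cl_smooth_map[where X="\<lambda>g. g = L"])
  fix g assume g: "g = L"
  have dv: "((\<lambda>t. L (x + t *\<^sub>R u)) has_vector_derivative L u) (at 0)" for x u
  proof -
    have "((\<lambda>t. x + t *\<^sub>R u) has_vector_derivative u) (at 0)"
      by (auto intro!: derivative_eq_intros)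
    then show ?thesis using bounded_linear.has_vector_derivative[OF assms] by blast
  qed
  have "pD g [u] = (\<lambda>x. L u)" for u using pD_single_eq[OF dv] g by auto
  then show "continuous_on UNIV g \<and> (\<forall>u\<in>Basis. \<forall>x. ((\<lambda>t. g (x + t *\<^sub>R u)) differentiable (at 0)))
              \<and> (\<forall>u\<in>Basis. cl (\<lambda>g. g = L) (pD g [u]))"
    using g dv assms by (auto intro: cl.intros smooth_const linear_continuous_on differentiableI_vector)
qed (rule cl_base, simp)

lemma smooth_comp_linear: assumes "bounded_linear L" "smooth_map f" shows "smooth_map (\<lambda>x. L (f x))"
proof (rule cl_smooth_map[where X="\<lambda>g. \<exists>f. smooth_map f \<and> g = (\<lambda>x. L (f x))"])
  fix g assume "\<exists>f. smooth_map f \<and> g = (\<lambda>x. L (f x))"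
  then obtain f where f: "smooth_map f" "g = (\<lambda>x. L (f x))" by auto
  have dv: "((\<lambda>t. L (f (x + t *\<^sub>R u))) has_vector_derivative L (pD f [u] x)) (at 0)" if "u \<in> Basis" for x u
    using bounded_linear.has_vector_derivative[OF assms(1) smooth_map_has[OF f(1) that]] .
  have "pD g [u] = (\<lambda>x. L (pD f [u] x))" if "u \<in> Basis" for u using pD_single_eq[OF dv[OF that]] f by auto
  moreover have "continuous_on UNIV g" using f smooth_map_cont[OF f(1)]
    by (auto intro: continuous_on_compose2[OF linear_continuous_on[OF assms(1)]])
  ultimately show "continuous_on UNIV g \<and> (\<forall>u\<in>Basis. \<forall>x. ((\<lambda>t. g (x + t *\<^sub>R u)) differentiable (at 0)))
              \<and> (\<forall>u\<in>Basis. cl (\<lambda>g. \<exists>f. smooth_map f \<and> g = (\<lambda>x. L (f x))) (pD g [u]))"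
    using f dv smooth_map_pD[OF f(1), of "[u]" for u] by (auto intro!: cl_base differentiableI_vector exI[where x="pD f [u]" for u])
qed (use assms in \<open>auto intro: cl_base\<close>)

lemma ev_line: fixes x u :: "'a::real_normed_vector" assumes "open S" "x \<in> S" shows "eventually (\<lambda>t::real. x + t *\<^sub>R u \<in> S) (nhds 0)"
proof -
  have "open ((\<lambda>t::real. x + t *\<^sub>R u) -` S)"
    by (rule open_vimage[OF assms(1)]) (intro continuous_on_add continuous_on_const continuous_on_scaleR continuous_on_id)
  moreover have "0 \<in> (\<lambda>t::real. x + t *\<^sub>R u) -` S" using assms by simp
  ultimately show ?thesis using eventually_nhds_in_open by fastforce
qed

lemma pD_local:
  assumes "open S" "\<And>y. y \<in> S \<Longrightarrow> g y = h y" "x \<in> S"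
  shows "pD g us x = pD h us x"
  using assms(3)
proof (induction us arbitrary: x)
  case Nil then show ?case using assms by simp
next
  case (Cons u us)
  have "eventually (\<lambda>t::real. t \<in> UNIV \<longrightarrow> pD g us (x + t *\<^sub>R u) = pD h us (x + t *\<^sub>R u)) (nhds 0)"
    using ev_line[OF assms(1) Cons.prems, of u] Cons.IH by (auto elim!: eventually_mono)
  then have "vector_derivative (\<lambda>t. pD g us (x + t *\<^sub>R u)) (at 0) = vector_derivative (\<lambda>t. pD h us (x + t *\<^sub>R u)) (at 0)"
    using vector_derivative_cong_eq[where f="\<lambda>t. pD g us (x + t *\<^sub>R u)" and A=UNIV and g="\<lambda>t. pD h us (x + t *\<^sub>R u)" and x=0 and y=0 and B=UNIV] by simp
  then show ?case by (simp add: pD.simps)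
qed

lemma smooth_local:
  assumes "\<And>x. \<exists>S h. open S \<and> x \<in> S \<and> smooth_map h \<and> (\<forall>y\<in>S. g y = h y)"
  shows "smooth_map g"
proof (rule smooth_map_coinduct[where X="\<lambda>g. \<forall>x. \<exists>S h. open S \<and> x \<in> S \<and> smooth_map h \<and> (\<forall>y\<in>S. g y = h y)"])
  fix g :: "'a \<Rightarrow> 'b"
  assume L: "\<forall>x. \<exists>S h. open S \<and> x \<in> S \<and> smooth_map h \<and> (\<forall>y\<in>S. g y = h y)"
  show "continuous_on UNIV g"
  proof (rule continuous_at_imp_continuous_on, intro ballI)
    fix x
    obtain S h where Sh: "open S" "x \<in> S" "smooth_map h" "\<forall>y\<in>S. g y = h y" using L by blast
    have "isCont h x" using smooth_map_cont[OF Sh(3)] by (simp add: continuous_on_eq_continuous_at)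
    obtain e where e: "e > 0" "ball x e \<subseteq> S" using Sh(1,2) open_contains_ball by blast
    show "isCont g x"
    proof (rule continuous_transform_within[OF \<open>isCont h x\<close> e(1), where g=g])
      fix x' assume "dist x' x < e"
      then have "x' \<in> S" using e by (auto simp: dist_commute subset_iff)
      then show "h x' = g x'" using Sh by auto
    qed auto
  qed
  fix u x :: 'a assume u: "u \<in> Basis"
  obtain S h where Sh: "open S" "x \<in> S" "smooth_map h" "\<forall>y\<in>S. g y = h y" using L by blast
  have ev: "eventually (\<lambda>t::real. t \<in> UNIV \<longrightarrow> h (x + t *\<^sub>R u) = g (x + t *\<^sub>R u)) (nhds 0)"
    using ev_line[OF Sh(1,2), of u] Sh(4) by (auto elim!: eventually_mono)
  have "((\<lambda>t. h (x + t *\<^sub>R u)) has_vector_derivative pD h [u] x) (at 0)" using smooth_map_has[OF Sh(3) u] .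
  then have "((\<lambda>t. g (x + t *\<^sub>R u)) has_vector_derivative pD h [u] x) (at 0)"
    using has_vector_derivative_cong_ev[OF ev] Sh by simp
  then show "(\<lambda>t. g (x + t *\<^sub>R u)) differentiable (at 0)" by (rule differentiableI_vector)
next
  fix g :: "'a \<Rightarrow> 'b" and u :: 'a
  assume L: "\<forall>x. \<exists>S h. open S \<and> x \<in> S \<and> smooth_map h \<and> (\<forall>y\<in>S. g y = h y)" and u: "u \<in> Basis"
  show "\<forall>x. \<exists>S h. open S \<and> x \<in> S \<and> smooth_map h \<and> (\<forall>y\<in>S. pD g [u] y = h y)"
  proof
    fix x
    obtain S h where Sh: "open S" "x \<in> S" "smooth_map h" "\<forall>y\<in>S. g y = h y" using L by blast
    then show "\<exists>S h. open S \<and> x \<in> S \<and> smooth_map h \<and> (\<forall>y\<in>S. pD g [u] y = h y)"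
      using pD_local[OF Sh(1), of g h] smooth_map_pD[OF Sh(3), of "[u]"] u by (intro exI[of _ S] exI[of _ "pD h [u]"]) auto
  qed
qed (use assms in auto)

lemma pD_add1:
  assumes "smooth_map f" "smooth_map g" "u \<in> Basis"
  shows "pD (\<lambda>x. f x + g x) [u] = (\<lambda>x. pD f [u] x + pD g [u] x)"
  using pD_single_eq[OF has_vector_derivative_add[OF smooth_map_has[OF assms(1,3)] smooth_map_has[OF assms(2,3)]]]
  by auto

lemma pD_add:
  assumes "smooth_map f" "smooth_map g" "set us \<subseteq> Basis"
  shows "pD (\<lambda>x. f x + g x) us = (\<lambda>x. pD f us x + pD g us x)"
  using assms(3)
proof (induction us)
  case Nil then show ?case by simp
next
  case (Cons u us)
  have "pD (\<lambda>x. f x + g x) (u # us) = pD (pD (\<lambda>x. f x + g x) us) [u]" by (simp add: pD_append)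
  also have "\<dots> = pD (\<lambda>x. pD f us x + pD g us x) [u]" using Cons by simp
  also have "\<dots> = (\<lambda>x. pD (pD f us) [u] x + pD (pD g us) [u] x)"
    using Cons.prems by (intro pD_add1 smooth_map_pD assms) auto
  finally show ?case by (simp add: pD_append)
qed

lemma pD_lin1:
  assumes "bounded_linear L" "smooth_map f" "u \<in> Basis"
  shows "pD (\<lambda>x. L (f x)) [u] = (\<lambda>x. L (pD f [u] x))"
  using pD_single_eq[OF bounded_linear.has_vector_derivative[OF assms(1) smooth_map_has[OF assms(2,3)]]]
  by auto

lemma pD_lin:
  assumes "bounded_linear L" "smooth_map f" "set us \<subseteq> Basis"
  shows "pD (\<lambda>x. L (f x)) us = (\<lambda>x. L (pD f us x))"
  using assms(3)
proof (induction us)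
  case Nil then show ?case by simp
next
  case (Cons u us)
  have "pD (\<lambda>x. L (f x)) (u # us) = pD (pD (\<lambda>x. L (f x)) us) [u]" by (simp add: pD_append)
  also have "\<dots> = pD (\<lambda>x. L (pD f us x)) [u]" using Cons by simp
  also have "\<dots> = (\<lambda>x. L (pD (pD f us) [u] x))"
    using Cons.prems by (intro pD_lin1 smooth_map_pD assms) auto
  finally show ?case by (simp add: pD_append)
qed

lemma pD_zero: "pD (\<lambda>x. 0) us = (\<lambda>x. 0)"
  by (induction us) (auto simp: pD.simps)

lemma smooth_sum:
  assumes "finite N" "\<And>n. n \<in> N \<Longrightarrow> smooth_map (f n)"
  shows "smooth_map (\<lambda>x. \<Sum>n\<in>N. f n x)"
  using assms
proof (induction N rule: finite_induct)
  case empty then show ?case by (simp add: smooth_const)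
next
  case (insert a N)
  then show ?case by (simp add: smooth_add)
qed

lemma pD_sum:
  assumes "finite N" "\<And>n. n \<in> N \<Longrightarrow> smooth_map (f n)" "set us \<subseteq> Basis"
  shows "pD (\<lambda>x. \<Sum>n\<in>N. f n x) us = (\<lambda>x. \<Sum>n\<in>N. pD (f n) us x)"
  using assms(1,2)
proof (induction N rule: finite_induct)
  case empty
  then show ?case by (simp add: pD_zero)
next
  case (insert a N)
  then show ?case by (simp add: pD_add smooth_sum assms(3))
qed

lemma smooth_comp1:
  assumes D: "\<And>j s. (D j has_real_derivative D (Suc j) s) (at s)" and g: "smooth_map (g::'a::euclidean_space \<Rightarrow> real)"
  shows "smooth_map (\<lambda>x. D j (g x))"
proof (rule cl_smooth_map[where X="\<lambda>h. \<exists>j. h = (\<lambda>x. D j (g x))"])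
  fix h assume "\<exists>j. h = (\<lambda>x. D j (g x))"
  then obtain j where h: "h = (\<lambda>x. D j (g x))" by auto
  have contD: "continuous_on UNIV (D j)" for j
    using D by (meson DERIV_isCont continuous_at_imp_continuous_on)
  have dv: "((\<lambda>t. D j (g (x + t *\<^sub>R u))) has_vector_derivative (pD g [u] x * D (Suc j) (g x))) (at 0)"
    if "u \<in> Basis" for x u j
  proof -
    have "((\<lambda>t. g (x + t *\<^sub>R u)) has_real_derivative pD g [u] x) (at 0)"
      using smooth_map_has[OF g that] by (simp add: has_real_derivative_iff_has_vector_derivative)
    from DERIV_chain2[OF D this] show ?thesis
      by (simp add: has_real_derivative_iff_has_vector_derivative mult.commute)
  qed
  have "pD h [u] = (\<lambda>x. pD g [u] x *\<^sub>R D (Suc j) (g x))" if "u \<in> Basis" for u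
    using pD_single_eq[OF dv[OF that]] h by auto
  moreover have "continuous_on UNIV h" unfolding h
    using continuous_on_compose2[OF contD smooth_map_cont[OF g]] by auto
  moreover have "cl (\<lambda>h. \<exists>j. h = (\<lambda>x. D j (g x))) (\<lambda>x. pD g [u] x *\<^sub>R D (Suc j) (g x))" if "u \<in> Basis" for u
    by (rule cl_smul[OF smooth_map_pD[OF g, of "[u]"]]) (use that in \<open>auto intro!: cl_base\<close>)
  ultimately show "continuous_on UNIV h \<and> (\<forall>u\<in>Basis. \<forall>x. ((\<lambda>t. h (x + t *\<^sub>R u)) differentiable (at 0)))
              \<and> (\<forall>u\<in>Basis. cl (\<lambda>h. \<exists>j. h = (\<lambda>x. D j (g x))) (pD h [u]))"
    using h dv by (auto intro!: differentiableI_vector)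
qed (auto intro: cl_base)

lemma smooth_inner_self: "smooth_map (\<lambda>x::'a::euclidean_space. x \<bullet> x)"
proof (rule cl_smooth_map[where X="\<lambda>h. h = (\<lambda>x::'a. x \<bullet> x)"])
  fix h :: "'a \<Rightarrow> real" assume h: "h = (\<lambda>x. x \<bullet> x)"
  have dv: "((\<lambda>t. (x + t *\<^sub>R u) \<bullet> (x + t *\<^sub>R u)) has_vector_derivative (2 * (x \<bullet> u))) (at 0)" for x u :: 'a
  proof -
    have eq: "(\<lambda>t. (x + t *\<^sub>R u) \<bullet> (x + t *\<^sub>R u)) = (\<lambda>t. x \<bullet> x + 2 * t * (x \<bullet> u) + t^2 * (u \<bullet> u))"
      by (auto simp: inner_add_left inner_add_right inner_commute power2_eq_square algebra_simps)
    have "((\<lambda>t. x \<bullet> x + 2 * t * (x \<bullet> u) + t^2 * (u \<bullet> u)) has_real_derivative (2 * (x \<bullet> u))) (at 0)"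
      by (auto intro!: derivative_eq_intros)
    then have "((\<lambda>t. (x + t *\<^sub>R u) \<bullet> (x + t *\<^sub>R u)) has_real_derivative (2 * (x \<bullet> u))) (at 0)"
      by (simp only: eq)
    then show ?thesis by (simp add: has_real_derivative_iff_has_vector_derivative)
  qed
  have "pD h [u] = (\<lambda>x. 2 * (x \<bullet> u))" for u using pD_single_eq[OF dv] h by auto
  moreover have "smooth_map (\<lambda>x::'a. 2 * (x \<bullet> u))" for u
    by (rule smooth_linear) (intro bounded_linear_const_mult bounded_linear_inner_left)
  ultimately show "continuous_on UNIV h \<and> (\<forall>u\<in>Basis. \<forall>x. ((\<lambda>t. h (x + t *\<^sub>R u)) differentiable (at 0)))
              \<and> (\<forall>u\<in>Basis. cl (\<lambda>h. h = (\<lambda>x::'a. x \<bullet> x)) (pD h [u]))"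
    using h dv by (auto intro!: cl_smooth differentiableI_vector continuous_intros)
qed (auto intro: cl_base)

fun Pp :: "nat \<Rightarrow> real poly" where
  "Pp 0 = 1"
| "Pp (Suc j) = [:0,0,1:] * (Pp j - pderiv (Pp j))"

definition Dphi :: "nat \<Rightarrow> real \<Rightarrow> real" where
  "Dphi j s = (if s > 0 then poly (Pp j) (1/s) * exp (-1/s) else 0)"

lemma poly_exp_lim: "((\<lambda>z. poly p z * z / exp z) \<longlongrightarrow> (0::real)) at_top"
proof -
  have eq: "(\<lambda>z. poly p z * z / exp z) = (\<lambda>z. \<Sum>i\<le>degree p. coeff p i * (z ^ Suc i / exp z))"
    by (rule ext) (simp add: poly_altdef sum_distrib_left sum_divide_distrib mult_ac)
  have "((\<lambda>z. \<Sum>i\<le>degree p. coeff p i * (z ^ Suc i / exp z)) \<longlongrightarrow> (\<Sum>i\<le>degree p. coeff p i * 0)) at_top"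
    by (intro tendsto_sum tendsto_mult tendsto_const tendsto_power_div_exp_0)
  then show ?thesis by (simp add: eq)
qed

lemma Dphi_deriv0: "(Dphi j has_real_derivative 0) (at 0)"
proof -
  have R: "((\<lambda>y. Dphi j y / y) \<longlongrightarrow> 0) (at_right 0)"
  proof -
    have "((\<lambda>y. poly (Pp j) (inverse y) * inverse y / exp (inverse y)) \<longlongrightarrow> 0) (at_right 0)"
      using filterlim_compose[OF poly_exp_lim[of "Pp j"] filterlim_inverse_at_top_right] by (simp add: o_def)
    moreover have "eventually (\<lambda>y. poly (Pp j) (inverse y) * inverse y / exp (inverse y) = Dphi j y / y) (at_right (0::real))"
      using eventually_at_right_less[of 0] 
      by eventually_elim (simp add: Dphi_def exp_minus inverse_eq_divide)
    ultimately show ?thesis by (rule Lim_transform_eventually)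
  qed
  have L: "((\<lambda>y. Dphi j y / y) \<longlongrightarrow> 0) (at_left 0)"
  proof -
    have "eventually (\<lambda>y. 0 = Dphi j y / y) (at_left (0::real))"
    proof -
      have "eventually (\<lambda>y. y \<in> {-1<..<0}) (at_left (0::real))" by (rule eventually_at_left_real) simp
      then show ?thesis by eventually_elim (auto simp: Dphi_def)
    qed
    then show ?thesis by (rule Lim_transform_eventually[OF tendsto_const])
  qed
  have "((\<lambda>y. Dphi j y / y) \<longlongrightarrow> 0) (at 0)" using filterlim_split_at[OF L R] .
  then show ?thesis by (simp add: DERIV_def Dphi_def)
qed

lemma Dphi_deriv: "(Dphi j has_real_derivative Dphi (Suc j) s) (at s)"
proof (cases "s > 0")
  case True
  let ?p = "Pp j"
  have d: "((\<lambda>s. poly ?p (1/s) * exp (-1/s)) has_real_derivative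
       (poly (pderiv ?p) (1/s) * (- 1 / s^2) * exp (-1/s) + poly ?p (1/s) * (exp (-1/s) * (1/s^2)))) (at s)"
    using True
    by (auto intro!: derivative_eq_intros DERIV_chain2[OF poly_DERIV] simp: power2_eq_square field_simps)
  have e: "poly (pderiv ?p) (1/s) * (- 1 / s^2) * exp (-1/s) + poly ?p (1/s) * (exp (-1/s) * (1/s^2)) = Dphi (Suc j) s"
    using True by (simp add: Dphi_def algebra_simps power2_eq_square)
  show ?thesis
    apply (rule has_field_derivative_transform_within_open[where S="{0<..}"])
    using d e True by (auto simp: Dphi_def)
next
  case False
  show ?thesis
  proof (cases "s = 0")
    case True then show ?thesis using Dphi_deriv0 by (simp add: Dphi_def)
  next
    case False
    then have "s < 0" using \<open>\<not> s > 0\<close> by simp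
    have d0: "((\<lambda>_. 0) has_real_derivative 0) (at s)" by simp
    show ?thesis
      using has_field_derivative_transform_within_open[OF d0, of "{..<0}" "Dphi j"] \<open>s < 0\<close>
      by (simp add: Dphi_def)
  qed
qed

lemma Dphi_pos: "s > 0 \<Longrightarrow> Dphi 0 s > 0" by (simp add: Dphi_def)
lemma Dphi_nonneg: "Dphi 0 s \<ge> 0" by (simp add: Dphi_def)
lemma Dphi_zero: "s \<le> 0 \<Longrightarrow> Dphi j s = 0" by (simp add: Dphi_def)

lemma shift_vd:
  assumes "\<And>y. ((\<lambda>\<tau>. h (y + \<tau> *\<^sub>R e)) has_vector_derivative D (y::'a::real_normed_vector)) (at 0)"
  shows "((\<lambda>s. h (y + s *\<^sub>R e)) has_vector_derivative D (y + s0 *\<^sub>R e)) (at s0)"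
proof -
  have f: "((\<lambda>s. s - s0) has_vector_derivative 1) (at s0)"
    by (auto intro!: derivative_eq_intros simp: has_real_derivative_iff_has_vector_derivative[symmetric])
  have g: "((\<lambda>\<tau>. h ((y + s0 *\<^sub>R e) + \<tau> *\<^sub>R e)) has_vector_derivative D (y + s0 *\<^sub>R e)) (at ((\<lambda>s. s - s0) s0))"
    using assms[of "y + s0 *\<^sub>R e"] by simp
  have "((\<lambda>\<tau>. h ((y + s0 *\<^sub>R e) + \<tau> *\<^sub>R e)) \<circ> (\<lambda>s. s - s0) has_vector_derivative 1 *\<^sub>R D (y + s0 *\<^sub>R e)) (at s0)"
    by (rule vector_diff_chain_at[OF f g])
  moreover have "((\<lambda>\<tau>. h ((y + s0 *\<^sub>R e) + \<tau> *\<^sub>R e)) \<circ> (\<lambda>s. s - s0)) = (\<lambda>s. h (y + s *\<^sub>R e))"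
    by (auto simp: o_def algebra_simps)
  ultimately show ?thesis by simp
qed

lemma vec2_eq: "(x::real^2) = x$1 *\<^sub>R axis 1 1 + x$2 *\<^sub>R axis 2 1"
  by (simp add: vec_eq_iff forall_2 axis_def)

lemma diff2D:
  fixes h :: "real^2 \<Rightarrow> 'c::real_normed_vector"
  assumes D: "\<And>x i. ((\<lambda>t. h (x + t *\<^sub>R axis i 1)) has_vector_derivative Dh i x) (at 0)"
      and C: "\<And>i. continuous_on UNIV (Dh i)"
  shows "h differentiable (at x)"
proof -
  define \<iota> where "\<iota> = (\<lambda>p::real\<times>real. fst p *\<^sub>R axis 1 1 + snd p *\<^sub>R (axis 2 1 :: real^2))"
  define k where "k = (\<lambda>s t. h (\<iota> (s, t)))"
  have ci: "continuous_on UNIV \<iota>" unfolding \<iota>_def by (intro continuous_intros)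
  have fx: "((\<lambda>s. k s t) has_derivative (\<lambda>ds. ds *\<^sub>R Dh 1 (\<iota> (s, t)))) (at s)" for s t
  proof -
    have "((\<lambda>s. h (t *\<^sub>R axis 2 1 + s *\<^sub>R axis 1 1)) has_vector_derivative Dh 1 (t *\<^sub>R axis 2 1 + s *\<^sub>R axis 1 1)) (at s)"
      by (rule shift_vd) (rule D)
    then show ?thesis unfolding k_def \<iota>_def has_vector_derivative_def by (simp add: add.commute)
  qed
  have fy: "((\<lambda>t. k s t) has_derivative blinfun_apply (blinfun_scaleR_left (Dh 2 (\<iota> (s, t))))) (at t)" for s t
  proof -
    have "((\<lambda>t. h (s *\<^sub>R axis 1 1 + t *\<^sub>R axis 2 1)) has_vector_derivative Dh 2 (s *\<^sub>R axis 1 1 + t *\<^sub>R axis 2 1)) (at t)"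
      by (rule shift_vd) (rule D)
    then show ?thesis unfolding k_def \<iota>_def has_vector_derivative_def by simp
  qed
  have cc: "continuous_on UNIV (\<lambda>p. blinfun_scaleR_left (Dh 2 (\<iota> p)))"
    by (intro continuous_on_compose2[OF linear_continuous_on[OF bounded_linear_blinfun_scaleR_left]]
        continuous_on_compose2[OF C ci]) auto
  have cy: "continuous (at (x$1, x$2) within UNIV \<times> UNIV) (\<lambda>(s, t). blinfun_scaleR_left (Dh 2 (\<iota> (s, t))))"
  proof -
    have "(\<lambda>(s, t). blinfun_scaleR_left (Dh 2 (\<iota> (s, t)))) = (\<lambda>p. blinfun_scaleR_left (Dh 2 (\<iota> p)))" by auto
    then show ?thesis using cc by (simp add: continuous_on_eq_continuous_at)
  qed
  have "((\<lambda>(s, t). k s t) has_derivative (\<lambda>(ts, tt). ts *\<^sub>R Dh 1 (\<iota> (x$1, x$2)) + blinfun_scaleR_left (Dh 2 (\<iota> (x$1, x$2))) tt))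
        (at (x$1, x$2) within UNIV \<times> UNIV)"
    by (rule has_derivative_partialsI[OF fx[THEN has_derivative_at_withinI] fy[THEN has_derivative_at_withinI] cy]) auto
  then have k: "((\<lambda>(s, t). k s t) has_derivative (\<lambda>(ts, tt). ts *\<^sub>R Dh 1 (\<iota> (x$1, x$2)) + blinfun_scaleR_left (Dh 2 (\<iota> (x$1, x$2))) tt))
        (at (x$1, x$2))" by simp
  have bl: "bounded_linear (\<lambda>x::real^2. (x$1, x$2))" by (intro bounded_linear_Pair bounded_linear_vec_nth)
  have l: "((\<lambda>x::real^2. (x$1, x$2)) has_derivative (\<lambda>x::real^2. (x$1, x$2))) (at x)"
    by (rule bounded_linear_imp_has_derivative[OF bl])
  note diff_chain_at[OF l k]
  moreover have "(\<lambda>(s, t). k s t) \<circ> (\<lambda>x::real^2. (x$1, x$2)) = h"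
    by (rule ext) (simp add: k_def \<iota>_def vec2_eq[symmetric])
  ultimately show ?thesis unfolding differentiable_def by auto
qed

lemma basis_x: "((axis i 1 :: real^2), (0::real^2)) \<in> (Basis :: ((real^2) \<times> (real^2)) set)"
  by (simp add: Basis_prod_def)
lemma basis_v: "((0::real^2), (axis i 1 :: real^2)) \<in> (Basis :: ((real^2) \<times> (real^2)) set)"
  by (simp add: Basis_prod_def)

lemma smooth_slice_cont:
  fixes g :: "(real^2) \<times> (real^2) \<Rightarrow> 'c::real_normed_vector"
  assumes "smooth_map g" shows "continuous_on UNIV (\<lambda>x. g (x, 0))"
  by (rule continuous_on_compose2[OF smooth_map_cont[OF assms]]) (auto intro!: continuous_intros)

lemma smooth_slice_diff:
  fixes g :: "(real^2) \<times> (real^2) \<Rightarrow> 'c::real_normed_vector"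
  assumes "smooth_map g" shows "(\<lambda>x. g (x, 0)) differentiable (at x)"
proof (rule diff2D[where Dh="\<lambda>i x. pD g [(axis i 1, 0)] (x, 0)"])
  fix x i
  have "((\<lambda>t. g ((x, 0) + t *\<^sub>R (axis i 1, 0))) has_vector_derivative pD g [(axis i 1, 0)] (x, 0)) (at 0)"
    by (rule smooth_map_has[OF assms basis_x])
  then show "((\<lambda>t. g (x + t *\<^sub>R axis i 1, 0)) has_vector_derivative pD g [(axis i 1, 0)] (x, 0)) (at 0)"
    by simp
next
  fix i :: 2
  show "continuous_on UNIV (\<lambda>x. pD g [(axis i 1, 0)] (x, 0))"
    by (rule smooth_slice_cont[OF smooth_map_pD[OF assms]]) (simp add: basis_x)
qed

definition col :: "((real^2) \<times> (real^2) \<Rightarrow> real^2) \<Rightarrow> 2 \<Rightarrow> real^2 \<Rightarrow> real^2" where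
  "col F j x = pD F [(0, axis j 1)] (x, 0)"

definition detF :: "((real^2) \<times> (real^2) \<Rightarrow> real^2) \<Rightarrow> real^2 \<Rightarrow> real" where
  "detF F x = (col F 1 x)$1 * (col F 2 x)$2 - (col F 1 x)$2 * (col F 2 x)$1"

definition goodQ :: "((real^2) \<times> (real^2) \<Rightarrow> real^2) \<Rightarrow> bool" where
  "goodQ F \<longleftrightarrow> (\<forall>x. F (x, 0) = 0 \<longrightarrow> detF F x \<noteq> 0)"

definition Ugood :: "((real^2) \<times> (real^2) \<Rightarrow> real^2) set" where
  "Ugood = {F. smooth_map F \<and> goodQ F}"

lemma col_cont: "smooth_map F \<Longrightarrow> continuous_on UNIV (col F j)"
  unfolding col_def by (rule smooth_slice_cont[OF smooth_map_pD]) (auto simp: basis_v)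

lemma detF_cont: assumes "smooth_map F" shows "continuous_on UNIV (detF F)"
proof -
  have cj: "continuous_on UNIV (\<lambda>x. col F j x $ i)" for i j
    by (rule continuous_on_compose2[OF linear_continuous_on[OF bounded_linear_vec_nth] col_cont[OF assms]]) auto
  show ?thesis unfolding detF_def by (intro continuous_intros cj)
qed

lemma deriv_dir:
  assumes "(F has_derivative L) (at p)"
  shows "((\<lambda>t. F (p + t *\<^sub>R u)) has_vector_derivative L u) (at 0)"
proof -
  have l: "((\<lambda>t::real. p + t *\<^sub>R u) has_derivative (\<lambda>t. t *\<^sub>R u)) (at 0)"
    by (auto intro!: derivative_eq_intros)
  have "((\<lambda>t. F (p + t *\<^sub>R u)) has_derivative (\<lambda>t. L (t *\<^sub>R u))) (at 0)"
    using has_derivative_compose[OF l, of F L] assms by simp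
  moreover have "L (t *\<^sub>R u) = t *\<^sub>R L u" for t
    using assms has_derivative_bounded_linear linear_scale bounded_linear.linear by blast
  ultimately show ?thesis by (simp add: has_vector_derivative_def)
qed

lemma good_no_crit:
  assumes sm: "smooth_map F" and g: "goodQ F" and c: "folding_critical F p"
  shows "p \<notin> zero_section"
proof
  assume "p \<in> zero_section"
  then obtain x where p: "p = (x, 0)" unfolding zero_section_def by (cases p) auto
  from c obtain L where F0: "F (x, 0) = 0" and L: "(F has_derivative L) (at (x, 0))"
      and nsurj: "fst ` {w. L w = 0} \<noteq> UNIV"
    unfolding folding_critical_def system_surface_def p by auto
  have lin: "linear L" using L has_derivative_linear by blast
  have Lc: "L (0, axis j 1) = col F j x" for j
  proof -
    have "((\<lambda>t. F ((x, 0) + t *\<^sub>R (0, axis j 1))) has_vector_derivative L (0, axis j 1)) (at 0)"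
      by (rule deriv_dir[OF L])
    moreover have "((\<lambda>t. F ((x, 0) + t *\<^sub>R (0, axis j 1))) has_vector_derivative col F j x) (at 0)"
      unfolding col_def by (rule smooth_map_has[OF sm basis_v])
    ultimately show ?thesis using vector_derivative_unique_at by blast
  qed
  define a where "a = col F 1 x"
  define b where "b = col F 2 x"
  define d where "d = a$1 * b$2 - a$2 * b$1"
  have d0: "d \<noteq> 0" using g F0 unfolding goodQ_def detF_def d_def a_def b_def by auto
  have "y \<in> fst ` {w. L w = 0}" for y
  proof -
    define r where "r = L (y, 0)"
    define \<beta>1 where "\<beta>1 = (- r$1 * b$2 + r$2 * b$1) / d"
    define \<beta>2 where "\<beta>2 = (- r$2 * a$1 + r$1 * a$2) / d"
    have w: "(y, \<beta>1 *\<^sub>R axis 1 1 + \<beta>2 *\<^sub>R axis 2 1) = (y, 0) + \<beta>1 *\<^sub>R (0, axis 1 1) + \<beta>2 *\<^sub>R (0, axis 2 1)"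
      by simp
    have "L ((y, 0) + \<beta>1 *\<^sub>R (0, axis 1 1) + \<beta>2 *\<^sub>R (0, axis 2 1)) = L (y, 0) + \<beta>1 *\<^sub>R L (0, axis 1 1) + \<beta>2 *\<^sub>R L (0, axis 2 1)"
      by (simp only: linear_add[OF lin] linear_scale[OF lin])
    then have "L (y, \<beta>1 *\<^sub>R axis 1 1 + \<beta>2 *\<^sub>R axis 2 1) = r + \<beta>1 *\<^sub>R a + \<beta>2 *\<^sub>R b"
      unfolding w[symmetric] r_def a_def b_def Lc .
    also have "\<dots> = 0"
    proof -
      have "r$1 + \<beta>1 * a$1 + \<beta>2 * b$1 = 0" using d0
        unfolding \<beta>1_def \<beta>2_def d_def by (simp add: field_simps | simp add: algebra_simps)+
      moreover have "r$2 + \<beta>1 * a$2 + \<beta>2 * b$2 = 0" using d0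
        unfolding \<beta>1_def \<beta>2_def d_def by (simp add: field_simps | simp add: algebra_simps)+
      ultimately show ?thesis by (simp add: vec_eq_iff forall_2)
    qed
    finally show ?thesis by (intro image_eqI[of _ _ "(y, \<beta>1 *\<^sub>R axis 1 1 + \<beta>2 *\<^sub>R axis 2 1)"]) auto
  qed
  then show False using nsurj by auto
qed

lemma det_pert:
  fixes a1 a2 b1 b2 e1 e2 e3 e4 d h M nF :: real
  assumes "\<bar>e1\<bar> < d" "\<bar>e2\<bar> < d" "\<bar>e3\<bar> < d" "\<bar>e4\<bar> < d" "d \<le> 1" "d * (2 * M + 3) \<le> h"
    "\<bar>a1\<bar> + \<bar>a2\<bar> + \<bar>b1\<bar> + \<bar>b2\<bar> \<le> 2 * M" "nF < d" "h = nF + \<bar>a1 * b2 - a2 * b1\<bar>"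
  shows "(a1 + e1) * (b2 + e4) - (a2 + e2) * (b1 + e3) \<noteq> 0"
proof -
  have ab: "\<bar>a1 * e4\<bar> \<le> \<bar>a1\<bar> * d" "\<bar>e1 * b2\<bar> \<le> d * \<bar>b2\<bar>" "\<bar>a2 * e3\<bar> \<le> \<bar>a2\<bar> * d" "\<bar>e2 * b1\<bar> \<le> d * \<bar>b1\<bar>"
    "\<bar>e1 * e4\<bar> \<le> d * d" "\<bar>e2 * e3\<bar> \<le> d * d"
  proof -
    show "\<bar>a1 * e4\<bar> \<le> \<bar>a1\<bar> * d" using assms(4) by (simp add: abs_mult mult_left_mono)
    show "\<bar>a2 * e3\<bar> \<le> \<bar>a2\<bar> * d" using assms(3) by (simp add: abs_mult mult_left_mono)
    show "\<bar>e1 * b2\<bar> \<le> d * \<bar>b2\<bar>" using assms(1) by (simp add: abs_mult mult_right_mono)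
    show "\<bar>e2 * b1\<bar> \<le> d * \<bar>b1\<bar>" using assms(2) by (simp add: abs_mult mult_right_mono)
    show "\<bar>e1 * e4\<bar> \<le> d * d" using assms(1,4) unfolding abs_mult by (intro mult_mono) auto
    show "\<bar>e2 * e3\<bar> \<le> d * d" using assms(2,3) unfolding abs_mult by (intro mult_mono) auto
  qed
  have "\<bar>a1 * e4 + e1 * b2 + e1 * e4 - a2 * e3 - e2 * b1 - e2 * e3\<bar> \<le>
      \<bar>a1 * e4\<bar> + \<bar>e1 * b2\<bar> + \<bar>e1 * e4\<bar> + \<bar>a2 * e3\<bar> + \<bar>e2 * b1\<bar> + \<bar>e2 * e3\<bar>" by linarith
  also have "\<dots> \<le> d * (\<bar>a1\<bar> + \<bar>a2\<bar> + \<bar>b1\<bar> + \<bar>b2\<bar>) + 2 * d * d" using ab by (simp add: algebra_simps)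
  also have "\<dots> \<le> d * (2 * M) + 2 * d" 
    using assms mult_left_mono[OF assms(7), of d] by (smt (verit) abs_ge_zero mult_right_le_one_le)
  finally have D: "\<bar>a1 * e4 + e1 * b2 + e1 * e4 - a2 * e3 - e2 * b1 - e2 * e3\<bar> \<le> d * (2 * M) + 2 * d" .
  have eq: "(a1 + e1) * (b2 + e4) - (a2 + e2) * (b1 + e3) = (a1 * b2 - a2 * b1) + (a1 * e4 + e1 * b2 + e1 * e4 - a2 * e3 - e2 * b1 - e2 * e3)"
    by (simp add: algebra_simps)
  have "d * (2 * M + 3) = d * (2 * M) + 3 * d" by (simp add: algebra_simps)
  then show ?thesis unfolding eq using D assms(6,8,9) by linarith
qed

lemma Ugood_open: "whitney_open Ugood"
  unfolding whitney_open_def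
proof (intro conjI ballI)
  show "Ugood \<subseteq> {f. smooth_map f}" unfolding Ugood_def by auto
  fix F assume "F \<in> Ugood"
  then have sm: "smooth_map F" and g: "goodQ F" unfolding Ugood_def by auto
  define M where "M = (\<lambda>x. norm (col F 1 x) + norm (col F 2 x))"
  define h where "h = (\<lambda>x. norm (F (x, 0)) + \<bar>detF F x\<bar>)"
  define \<delta> where "\<delta> = (\<lambda>p::(real^2) \<times> (real^2). min 1 (h (fst p) / (2 * M (fst p) + 3)))"
  have Mc: "continuous_on UNIV M" unfolding M_def using col_cont[OF sm] by (intro continuous_intros) auto
  have hc: "continuous_on UNIV h" unfolding h_def using detF_cont[OF sm] smooth_slice_cont[OF sm]
    by (intro continuous_intros) auto
  have M0: "M x \<ge> 0" for x unfolding M_def by simp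
  have hpos: "h x > 0" for x using g unfolding h_def goodQ_def by (cases "F (x, 0) = 0") (auto intro: add_pos_nonneg)
  have dc: "continuous_on UNIV \<delta>" unfolding \<delta>_def
    by (intro continuous_intros continuous_on_compose2[OF hc] continuous_on_compose2[OF Mc])
       (use M0 in \<open>auto simp: add_nonneg_pos\<close>, metis M0 add_nonneg_pos mult_nonneg_nonneg zero_less_numeral less_irrefl zero_le_numeral)
  have dpos: "\<forall>x. 0 < \<delta> x" unfolding \<delta>_def using hpos M0 by (auto simp: add_nonneg_pos)
  have "whitney_nbhd F 1 \<delta> \<subseteq> Ugood"
  proof
    fix G assume G: "G \<in> whitney_nbhd F 1 \<delta>"
    then have smG: "smooth_map G" unfolding whitney_nbhd_def by auto
    have Gb: "\<And>us y. set us \<subseteq> Basis \<Longrightarrow> length us \<le> 1 \<Longrightarrow> norm (pD G us y - pD F us y) < \<delta> y"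
      using G unfolding whitney_nbhd_def by auto
    have gG: "goodQ G" unfolding goodQ_def
    proof (intro allI impI)
      fix x assume G0: "G (x, 0) = 0"
      let ?d = "\<delta> (x, 0)"
      have "norm (pD G [] (x, 0) - pD F [] (x, 0)) < ?d" using Gb[of "[]"] by simp
      then have nF: "norm (F (x, 0)) < ?d" using G0 by simp
      have cj: "norm (col G j x - col F j x) < ?d" for j
        using Gb[of "[(0, axis j 1)]"] basis_v[of j] unfolding col_def by simp
      have ce: "\<bar>(col G j x)$i - (col F j x)$i\<bar> < ?d" for i j
        using le_less_trans[OF component_le_norm_cart cj] by simp
      have d1: "?d \<le> 1" unfolding \<delta>_def by simp
      have A: "2 * M x + 3 > 0" using M0[of x] by linarith
      have "?d \<le> h x / (2 * M x + 3)" unfolding \<delta>_def by simp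
      then have d2: "?d * (2 * M x + 3) \<le> h x" by (simp add: pos_le_divide_eq A)
      have s: "\<bar>(col F 1 x)$1\<bar> + \<bar>(col F 1 x)$2\<bar> + \<bar>(col F 2 x)$1\<bar> + \<bar>(col F 2 x)$2\<bar> \<le> 2 * M x"
        unfolding M_def using component_le_norm_cart[of "col F 1 x" 1] component_le_norm_cart[of "col F 2 x" 1]
          component_le_norm_cart[of "col F 1 x" 2] component_le_norm_cart[of "col F 2 x" 2]
        by (simp add: algebra_simps)
      have "((col F 1 x)$1 + ((col G 1 x)$1 - (col F 1 x)$1)) * ((col F 2 x)$2 + ((col G 2 x)$2 - (col F 2 x)$2))
          - ((col F 1 x)$2 + ((col G 1 x)$2 - (col F 1 x)$2)) * ((col F 2 x)$1 + ((col G 2 x)$1 - (col F 2 x)$1)) \<noteq> 0"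
        by (rule det_pert[OF ce ce ce ce d1 d2 s nF]) (simp add: h_def detF_def)
      then show "detF G x \<noteq> 0" unfolding detF_def by simp
    qed
    show "G \<in> Ugood" using smG gG unfolding Ugood_def by auto
  qed
  then show "\<exists>k \<delta>. continuous_on UNIV \<delta> \<and> (\<forall>x. 0 < \<delta> x) \<and> whitney_nbhd F k \<delta> \<subseteq> Ugood"
    using dc dpos by blast
qed

type_synonym pt = "(real^2) \<times> (real^2)"
type_synonym prm = "(real^2) \<times> ((real^2) \<times> (real^2))"

lemma smooth_diff: "smooth_map f \<Longrightarrow> smooth_map g \<Longrightarrow> smooth_map (\<lambda>x. f x - g x)"
  using smooth_add[of f "\<lambda>x. - g x"] smooth_comp_linear[OF bounded_linear_minus[OF bounded_linear_ident], of g]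
  by simp

definition qf :: "pt \<Rightarrow> real" where "qf p = p \<bullet> p"
definition psi :: "nat \<Rightarrow> pt \<Rightarrow> real" where "psi n p = Dphi 0 (1 - (qf p - real n) * (qf p - real n))"
definition psi1 :: "nat \<Rightarrow> pt \<Rightarrow> real" where "psi1 n p = psi n p * (snd p)$1"
definition psi2 :: "nat \<Rightarrow> pt \<Rightarrow> real" where "psi2 n p = psi n p * (snd p)$2"

lemma qf_cont: "continuous_on UNIV qf" unfolding qf_def by (intro continuous_intros)
lemma qf_nonneg: "qf p \<ge> 0" unfolding qf_def by simp

lemma smooth_qf: "smooth_map qf" unfolding qf_def by (rule smooth_inner_self)

lemma smooth_psi: "smooth_map (psi n)"
proof -
  have "smooth_map (\<lambda>p. 1 - (qf p - real n) * (qf p - real n))"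
    by (intro smooth_diff smooth_mult smooth_const smooth_qf)
  then show ?thesis unfolding psi_def[abs_def] by (rule smooth_comp1[where D=Dphi, OF Dphi_deriv])
qed

lemma smooth_sndc: "smooth_map (\<lambda>p::pt. (snd p)$j)"
  by (rule smooth_linear) (rule bounded_linear_compose[OF bounded_linear_vec_nth bounded_linear_snd])

lemma smooth_psi1: "smooth_map (psi1 n)" unfolding psi1_def[abs_def] by (intro smooth_mult smooth_psi smooth_sndc)
lemma smooth_psi2: "smooth_map (psi2 n)" unfolding psi2_def[abs_def] by (intro smooth_mult smooth_psi smooth_sndc)

lemma psi_zero: "1 \<le> \<bar>qf p - real n\<bar> \<Longrightarrow> psi n p = 0"
proof -
  assume a: "1 \<le> \<bar>qf p - real n\<bar>"
  have "1 * 1 \<le> \<bar>qf p - real n\<bar> * \<bar>qf p - real n\<bar>" by (rule mult_mono) (use a in auto)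
  then have "1 - (qf p - real n) * (qf p - real n) \<le> 0" by (simp add: abs_mult[symmetric])
  then show ?thesis unfolding psi_def by (rule Dphi_zero)
qed

lemma psi_nonneg: "psi n p \<ge> 0" unfolding psi_def by (rule Dphi_nonneg)

lemma psi_pos: "\<bar>qf p - real n\<bar> < 1 \<Longrightarrow> psi n p > 0"
proof -
  assume a: "\<bar>qf p - real n\<bar> < 1"
  have "\<bar>qf p - real n\<bar> * \<bar>qf p - real n\<bar> < 1 * 1"
    by (rule mult_strict_mono) (use a in auto)
  then have "1 - (qf p - real n) * (qf p - real n) > 0" by (simp add: abs_mult[symmetric])
  then show ?thesis unfolding psi_def by (rule Dphi_pos)
qed

definition Lk :: "nat \<Rightarrow> pt list set" where "Lk k = {us. set us \<subseteq> Basis \<and> length us \<le> k}"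

lemma finite_Lk: "finite (Lk k)" unfolding Lk_def by (rule finite_lists_length_le) simp

definition W :: "nat \<Rightarrow> nat \<Rightarrow> pt \<Rightarrow> real" where
  "W k n p = (\<Sum>us\<in>Lk k. \<bar>pD (psi n) us p\<bar> + \<bar>pD (psi1 n) us p\<bar> + \<bar>pD (psi2 n) us p\<bar>)"

lemma W_cont: "continuous_on UNIV (W k n)"
proof -
  have c: "continuous_on UNIV (pD f us)" if "smooth_map f" "us \<in> Lk k" for f :: "pt \<Rightarrow> real" and us
    using smooth_map_cont[OF smooth_map_pD[OF that(1)]] that(2) unfolding Lk_def by auto
  show ?thesis unfolding W_def[abs_def]
    by (intro continuous_on_sum continuous_intros c smooth_psi smooth_psi1 smooth_psi2)
qed

lemma W_nonneg: "W k n p \<ge> 0" unfolding W_def by (intro sum_nonneg) auto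

lemma W1ne: "4 * 2^n * (1 + W k n p) \<noteq> 0" using W_nonneg[of k n p] by simp
lemma W1ne': "1 + W k n p \<noteq> 0" using W_nonneg[of k n p] by simp

definition Kc :: "nat \<Rightarrow> pt set" where "Kc n = {p. real n - 1 \<le> qf p \<and> qf p \<le> real n + 1}"

lemma compact_Kc: "compact (Kc n)"
proof -
  have cl: "closed (Kc n)" unfolding Kc_def
    by (intro closed_Collect_conj closed_Collect_le qf_cont continuous_on_const)
  have "norm p \<le> real n + 2" if "p \<in> Kc n" for p
  proof (cases "norm p \<le> 1")
    case False
    then have "norm p \<le> norm p * norm p" by (simp add: mult_le_cancel_left1)
    also have "\<dots> = qf p" unfolding qf_def by (simp add: power2_norm_eq_inner[symmetric] power2_eq_square)
    finally show ?thesis using that unfolding Kc_def by auto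
  qed auto
  then have "bounded (Kc n)" unfolding bounded_iff by blast
  then show ?thesis using cl by (simp add: compact_eq_bounded_closed)
qed

lemma exists_a:
  assumes dc: "continuous_on UNIV \<delta>" and dp: "\<And>p. 0 < \<delta> p"
  shows "\<exists>a>0. \<forall>p\<in>Kc n. a * W k n p \<le> \<delta> p / 4 * (1/2)^n"
proof (cases "Kc n = {}")
  case True then show ?thesis by (intro exI[of _ 1]) auto
next
  case False
  define f where "f = (\<lambda>p. \<delta> p / (4 * 2^n * (1 + W k n p)))"
  have fc: "continuous_on (Kc n) f" unfolding f_def
    using W_nonneg
    by (intro continuous_intros continuous_on_subset[OF dc] continuous_on_subset[OF W_cont])
       (auto simp: W1ne W1ne')
  obtain p0 where p0: "p0 \<in> Kc n" "\<And>p. p \<in> Kc n \<Longrightarrow> f p0 \<le> f p"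
    using continuous_attains_inf[OF compact_Kc False fc] by blast
  have fpos: "f p0 > 0" unfolding f_def using dp[of p0] W_nonneg[of k n p0] by (simp add: add_pos_nonneg)
  have "f p0 * W k n p \<le> \<delta> p / 4 * (1/2)^n" if "p \<in> Kc n" for p
  proof -
    have "f p0 * W k n p \<le> f p0 * (1 + W k n p)" using fpos by simp
    also have "\<dots> \<le> f p * (1 + W k n p)" using p0(2)[OF that] W_nonneg[of k n p]
      by (intro mult_right_mono) auto
    also have "\<dots> = \<delta> p * (1 + W k n p) / ((4 * 2^n) * (1 + W k n p))" unfolding f_def by simp
    also have "\<dots> = \<delta> p / (4 * 2^n)" using W1ne'[of k n p] by (rule nonzero_mult_divide_mult_cancel_right)
    also have "\<dots> = \<delta> p / 4 * (1/2)^n" by (simp add: power_one_over)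
    finally show ?thesis .
  qed
  then show ?thesis using fpos by blast
qed

definition Esum :: "(nat \<Rightarrow> real) \<Rightarrow> pt \<Rightarrow> real" where
  "Esum a p = (\<Sum>n<nat \<lceil>qf p\<rceil> + 1. a n * psi n p)"

definition ell :: "prm \<Rightarrow> pt \<Rightarrow> real^2" where
  "ell \<theta> p = fst \<theta> + (snd p)$1 *\<^sub>R fst (snd \<theta>) + (snd p)$2 *\<^sub>R snd (snd \<theta>)"

definition Pt :: "(nat \<Rightarrow> real) \<Rightarrow> prm \<Rightarrow> pt \<Rightarrow> real^2" where
  "Pt a \<theta> p = Esum a p *\<^sub>R ell \<theta> p"

definition Tn :: "prm \<Rightarrow> nat \<Rightarrow> pt \<Rightarrow> real^2" where
  "Tn \<theta> n p = psi n p *\<^sub>R fst \<theta> + psi1 n p *\<^sub>R fst (snd \<theta>) + psi2 n p *\<^sub>R snd (snd \<theta>)"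

definition Kn :: "pt \<Rightarrow> nat" where "Kn p0 = nat \<lceil>qf p0\<rceil> + 2"

lemma Esum_local:
  assumes "qf p < qf p0 + 1"
  shows "Esum a p = (\<Sum>n<Kn p0. a n * psi n p)"
proof -
  have le: "nat \<lceil>qf p\<rceil> + 1 \<le> Kn p0" unfolding Kn_def
  proof -
    have "\<lceil>qf p\<rceil> \<le> \<lceil>qf p0\<rceil> + 1" using assms by (metis ceiling_add_one ceiling_mono less_imp_le)
    then show "nat \<lceil>qf p\<rceil> + 1 \<le> nat \<lceil>qf p0\<rceil> + 2" using qf_nonneg[of p0] by linarith
  qed
  have z: "a n * psi n p = 0" if "n \<in> {..<Kn p0} - {..<nat \<lceil>qf p\<rceil> + 1}" for n
  proof -
    have "real n \<ge> real (nat \<lceil>qf p\<rceil> + 1)" using that by auto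
    moreover have "real (nat \<lceil>qf p\<rceil>) \<ge> qf p" using qf_nonneg[of p] by linarith
    ultimately have "1 \<le> \<bar>qf p - real n\<bar>" by simp
    then show ?thesis using psi_zero by simp
  qed
  show ?thesis unfolding Esum_def
    by (rule sum.mono_neutral_left) (use le z in auto)
qed

lemma Tn_eq: "psi n p *\<^sub>R ell \<theta> p = Tn \<theta> n p"
  unfolding Tn_def ell_def psi1_def psi2_def by (simp add: scaleR_add_right)

lemma Pt_local:
  assumes "qf p < qf p0 + 1"
  shows "Pt a \<theta> p = (\<Sum>n<Kn p0. a n *\<^sub>R Tn \<theta> n p)"
  unfolding Pt_def Esum_local[OF assms] scaleR_sum_left by (simp add: Tn_eq[symmetric])

lemma open_loc: "open {p. qf p < qf p0 + 1}"
  by (intro open_Collect_less qf_cont continuous_on_const)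

lemma smooth_Tn: "smooth_map (Tn \<theta> n)"
  unfolding Tn_def[abs_def]
  by (intro smooth_add smooth_smul smooth_psi smooth_psi1 smooth_psi2 smooth_const)

lemma smooth_Pt: "smooth_map (Pt a \<theta>)"
proof (rule smooth_local)
  fix p0
  show "\<exists>S h. open S \<and> p0 \<in> S \<and> smooth_map h \<and> (\<forall>y\<in>S. Pt a \<theta> y = h y)"
    using Pt_local open_loc
    by (intro exI[of _ "{p. qf p < qf p0 + 1}"] exI[of _ "\<lambda>p. \<Sum>n<Kn p0. a n *\<^sub>R Tn \<theta> n p"])
       (auto intro!: smooth_sum smooth_smul smooth_const smooth_Tn)
qed

lemma smooth_Esum: "smooth_map (Esum a)"
proof (rule smooth_local)
  fix p0
  show "\<exists>S h. open S \<and> p0 \<in> S \<and> smooth_map h \<and> (\<forall>y\<in>S. Esum a y = h y)"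
    using Esum_local open_loc
    by (intro exI[of _ "{p. qf p < qf p0 + 1}"] exI[of _ "\<lambda>p. \<Sum>n<Kn p0. a n * psi n p"])
       (auto intro!: smooth_sum smooth_mult smooth_const smooth_psi)
qed

lemma pD_Tn:
  assumes "set us \<subseteq> Basis"
  shows "pD (Tn \<theta> n) us p = pD (psi n) us p *\<^sub>R fst \<theta> + pD (psi1 n) us p *\<^sub>R fst (snd \<theta>) + pD (psi2 n) us p *\<^sub>R snd (snd \<theta>)"
proof -
  have l: "pD (\<lambda>p. f p *\<^sub>R c) us = (\<lambda>p. pD f us p *\<^sub>R c)" if "smooth_map f" for f :: "pt \<Rightarrow> real" and c :: "real^2"
    using pD_lin[OF bounded_linear_scaleR_left[of c] that assms] by simp
  have s: "smooth_map (\<lambda>p. f p *\<^sub>R c)" if "smooth_map f" for f :: "pt \<Rightarrow> real" and c :: "real^2"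
    by (intro smooth_smul that smooth_const)
  show ?thesis unfolding Tn_def[abs_def]
    by (simp add: pD_add[OF smooth_add, OF s s s] pD_add[OF s s] assms l smooth_psi smooth_psi1 smooth_psi2 s)
qed

lemma Tn_bound:
  assumes "us \<in> Lk k" "norm (fst \<theta>) \<le> 1" "norm (fst (snd \<theta>)) \<le> 1" "norm (snd (snd \<theta>)) \<le> 1"
  shows "norm (pD (Tn \<theta> n) us p) \<le> W k n p"
proof -
  have b: "set us \<subseteq> Basis" using assms(1) unfolding Lk_def by auto
  have "norm (pD (Tn \<theta> n) us p) \<le> \<bar>pD (psi n) us p\<bar> * norm (fst \<theta>) + \<bar>pD (psi1 n) us p\<bar> * norm (fst (snd \<theta>))
      + \<bar>pD (psi2 n) us p\<bar> * norm (snd (snd \<theta>))"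
    unfolding pD_Tn[OF b] by (metis norm_scaleR norm_triangle_le norm_triangle_ineq add_mono order_refl)
  also have "\<dots> \<le> \<bar>pD (psi n) us p\<bar> + \<bar>pD (psi1 n) us p\<bar> + \<bar>pD (psi2 n) us p\<bar>"
    using assms(2-4) by (intro add_mono mult_right_le_one_le) auto
  also have "\<dots> \<le> W k n p" unfolding W_def
    by (rule member_le_sum[OF assms(1)]) (auto simp: finite_Lk)
  finally show ?thesis .
qed

lemma Tn_zero:
  assumes "p \<notin> Kc n"
  shows "pD (Tn \<theta> n) us p = 0"
proof -
  define S where "S = {p'. qf p' < real n - 1} \<union> {p'. real n + 1 < qf p'}"
  have S: "open S" unfolding S_def by (intro open_Un open_Collect_less qf_cont continuous_on_const)
  have pS: "p \<in> S" using assms unfolding S_def Kc_def by auto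
  have "Tn \<theta> n y = 0" if "y \<in> S" for y
  proof -
    have "1 \<le> \<bar>qf y - real n\<bar>" using that unfolding S_def by auto
    then show ?thesis unfolding Tn_def psi1_def psi2_def using psi_zero by simp
  qed
  then have "pD (Tn \<theta> n) us p = pD (\<lambda>_. 0) us p" by (intro pD_local[OF S _ pS]) auto
  then show ?thesis by (simp add: pD_zero)
qed

lemma Pt_bound:
  assumes ap: "\<And>n. a n > 0" "\<And>n p. p \<in> Kc n \<Longrightarrow> a n * W k n p \<le> \<delta> p / 4 * (1/2)^n"
    and dp: "\<delta> p0 > 0"
    and us: "us \<in> Lk k" and th: "norm (fst \<theta>) \<le> 1" "norm (fst (snd \<theta>)) \<le> 1" "norm (snd (snd \<theta>)) \<le> 1"
  shows "norm (pD (Pt a \<theta>) us p0) < \<delta> p0"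
proof -
  have b: "set us \<subseteq> Basis" using us unfolding Lk_def by auto
  have "pD (Pt a \<theta>) us p0 = pD (\<lambda>p. \<Sum>n<Kn p0. a n *\<^sub>R Tn \<theta> n p) us p0"
    by (rule pD_local[OF open_loc[of p0]]) (auto simp: Pt_local)
  also have "\<dots> = (\<Sum>n<Kn p0. pD (\<lambda>p. a n *\<^sub>R Tn \<theta> n p) us p0)"
    by (subst pD_sum) (auto intro!: smooth_smul smooth_const smooth_Tn b)
  also have "\<dots> = (\<Sum>n<Kn p0. a n *\<^sub>R pD (Tn \<theta> n) us p0)"
    using pD_lin[OF bounded_linear_scaleR_right smooth_Tn b] by simp
  finally have eq: "pD (Pt a \<theta>) us p0 = (\<Sum>n<Kn p0. a n *\<^sub>R pD (Tn \<theta> n) us p0)" .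
  have t: "norm (a n *\<^sub>R pD (Tn \<theta> n) us p0) \<le> \<delta> p0 / 4 * (1/2)^n" for n
  proof (cases "p0 \<in> Kc n")
    case True
    have "norm (a n *\<^sub>R pD (Tn \<theta> n) us p0) = a n * norm (pD (Tn \<theta> n) us p0)"
      using ap(1)[of n] by simp
    also have "\<dots> \<le> a n * W k n p0" using Tn_bound[OF us th] ap(1)[of n] by (intro mult_left_mono) auto
    also have "\<dots> \<le> \<delta> p0 / 4 * (1/2)^n" using ap(2)[OF True] .
    finally show ?thesis .
  next
    case False then show ?thesis using Tn_zero[OF False] dp by simp
  qed
  have "norm (pD (Pt a \<theta>) us p0) \<le> (\<Sum>n<Kn p0. norm (a n *\<^sub>R pD (Tn \<theta> n) us p0))"
    unfolding eq by (rule norm_sum)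
  also have "\<dots> \<le> (\<Sum>n<Kn p0. \<delta> p0 / 4 * (1/2)^n)" by (intro sum_mono t)
  also have "\<dots> = \<delta> p0 / 4 * (\<Sum>n<Kn p0. (1/2)^n)" by (simp add: sum_distrib_left)
  also have "\<dots> \<le> \<delta> p0 / 4 * 2"
  proof -
    have "(\<Sum>n<Kn p0. (1/2::real)^n) = (1 - (1/2)^Kn p0) / (1 - 1/2)" by (subst sum_gp_strict) simp
    also have "\<dots> \<le> 2" by simp
    finally show ?thesis using dp by (intro mult_left_mono) auto
  qed
  also have "\<dots> < \<delta> p0" using dp by simp
  finally show ?thesis .
qed

lemma Esum_pos: assumes "\<And>n. a n > 0" shows "Esum a p > 0"
proof -
  define n0 where "n0 = nat \<lfloor>qf p\<rfloor>"
  have n0: "\<bar>qf p - real n0\<bar> < 1" unfolding n0_def using qf_nonneg[of p] by linarith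
  have "n0 \<in> {..<nat \<lceil>qf p\<rceil> + 1}" unfolding n0_def by (simp add: le_nat_iff nat_le_iff) linarith
  moreover have "a n0 * psi n0 p > 0" using assms psi_pos[OF n0] by simp
  moreover have "a i * psi i p \<ge> 0" for i using assms[of i] psi_nonneg[of i p] by simp
  ultimately show ?thesis unfolding Esum_def
    by (intro sum_pos2[where i=n0]) auto
qed

lemma even_deriv0:
  fixes g :: "real \<Rightarrow> real"
  assumes d: "(g has_real_derivative d) (at 0)" and ev: "\<And>t. g (- t) = g t"
  shows "d = 0"
proof -
  have "DERIV g (- 0) :> d" using d by simp
  then have "DERIV (\<lambda>x. g (- x)) 0 :> - d" using DERIV_mirror by blast
  moreover have "(\<lambda>x. g (- x)) = g" using ev by auto
  ultimately have "DERIV g 0 :> - d" by simp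
  then have "d = - d" using DERIV_unique[OF d] by blast
  then show ?thesis by simp
qed

lemma Pt_at0: "Pt a \<theta> (x, 0) = Esum a (x, 0) *\<^sub>R fst \<theta>"
  unfolding Pt_def ell_def by simp

definition mcol :: "prm \<Rightarrow> 2 \<Rightarrow> real^2" where
  "mcol \<theta> j = (if j = 1 then fst (snd \<theta>) else snd (snd \<theta>))"

lemma col_Pt: "pD (Pt a \<theta>) [(0, axis j 1)] (x, 0) = Esum a (x, 0) *\<^sub>R mcol \<theta> j"
proof -
  let ?u = "(0::real^2, axis j 1 :: real^2)"
  let ?g = "\<lambda>t. Esum a ((x, 0) + t *\<^sub>R ?u)"
  have gE: "(?g has_vector_derivative pD (Esum a) [?u] (x, 0)) (at 0)"
    by (rule smooth_map_has[OF smooth_Esum basis_v])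
  then have gR: "(?g has_real_derivative pD (Esum a) [?u] (x, 0)) (at 0)"
    by (simp add: has_real_derivative_iff_has_vector_derivative)
  have ev: "?g (- t) = ?g t" for t
    unfolding Esum_def psi_def qf_def by (simp add: inner_commute)
  have d0: "pD (Esum a) [?u] (x, 0) = 0" by (rule even_deriv0[OF gR ev])
  have el: "ell \<theta> ((x, 0) + t *\<^sub>R ?u) = fst \<theta> + t *\<^sub>R mcol \<theta> j" for t
    unfolding ell_def mcol_def using exhaust_2[of j] by (auto simp: axis_def)
  have elD: "((\<lambda>t. fst \<theta> + t *\<^sub>R mcol \<theta> j) has_vector_derivative mcol \<theta> j) (at 0)"
    by (auto intro!: derivative_eq_intros)
  have "((\<lambda>t. ?g t *\<^sub>R (fst \<theta> + t *\<^sub>R mcol \<theta> j)) has_vector_derivative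
        (?g 0 *\<^sub>R mcol \<theta> j + pD (Esum a) [?u] (x, 0) *\<^sub>R (fst \<theta> + 0 *\<^sub>R mcol \<theta> j))) (at 0)"
    by (rule has_vector_derivative_scaleR[OF gR elD])
  then have "((\<lambda>t. Pt a \<theta> ((x, 0) + t *\<^sub>R ?u)) has_vector_derivative Esum a (x, 0) *\<^sub>R mcol \<theta> j) (at 0)"
    unfolding Pt_def el d0 by simp
  then show ?thesis by (rule pD_single_eq)
qed

definition wv :: "real \<Rightarrow> real^2" where "wv \<phi> = cos \<phi> *\<^sub>R axis 1 1 + sin \<phi> *\<^sub>R axis 2 1"

lemma wv_comp: "wv \<phi> $ 1 = cos \<phi>" "wv \<phi> $ 2 = sin \<phi>"
  unfolding wv_def by (simp_all add: axis_def)

lemma polar_unit: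
  fixes v :: "real^2" assumes "v \<noteq> 0"
  shows "\<exists>\<phi> r. v = r *\<^sub>R wv \<phi>"
proof -
  define r where "r = sqrt ((v$1)^2 + (v$2)^2)"
  have "(v$1)^2 + (v$2)^2 \<noteq> 0"
  proof
    assume "(v$1)^2 + (v$2)^2 = 0"
    then have "v$1 = 0" "v$2 = 0" by (simp_all add: sum_power2_eq_zero_iff)
    then have "v = 0" by (simp add: vec_eq_iff forall_2)
    then show False using assms by simp
  qed
  moreover have "(v$1)^2 + (v$2)^2 \<ge> 0" by simp
  ultimately have spos: "(v$1)^2 + (v$2)^2 > 0" by linarith
  then have rpos: "r > 0" unfolding r_def by simp
  have r2: "r^2 = (v$1)^2 + (v$2)^2" unfolding r_def by simp
  have "(v$1 / r)^2 + (v$2 / r)^2 = ((v$1)^2 + (v$2)^2) / r^2" by (simp add: power_divide add_divide_distrib)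
  also have "\<dots> = 1" unfolding r2 by (intro divide_self) (use spos in linarith)
  finally have "(v$1 / r)^2 + (v$2 / r)^2 = 1" .
  then obtain t where t: "v$1 / r = cos t" "v$2 / r = sin t" by (rule sincos_total_2pi) auto
  have "v = r *\<^sub>R wv t" using t rpos by (simp add: vec_eq_iff forall_2 wv_comp field_simps)
  then show ?thesis by blast
qed

lemma polar_dep:
  fixes n1 n2 :: "real^2"
  assumes "n1$1 * n2$2 - n1$2 * n2$1 = 0"
  shows "\<exists>\<phi> \<alpha> \<beta>. n1 = \<alpha> *\<^sub>R wv \<phi> \<and> n2 = \<beta> *\<^sub>R wv \<phi>"
proof (cases "n1 = 0")
  case False
  then obtain \<phi> r where n1: "n1 = r *\<^sub>R wv \<phi>" using polar_unit by blast
  have rne: "r \<noteq> 0" using False n1 by auto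
  have "r * (cos \<phi> * n2$2 - sin \<phi> * n2$1) = 0" using assms n1 by (simp add: wv_comp algebra_simps)
  then have h: "cos \<phi> * n2$2 = sin \<phi> * n2$1" using rne by simp
  define \<beta> where "\<beta> = cos \<phi> * n2$1 + sin \<phi> * n2$2"
  have c1: "\<beta> * cos \<phi> = n2$1"
  proof -
    have "\<beta> * cos \<phi> - (cos \<phi> * cos \<phi> + sin \<phi> * sin \<phi>) * n2$1 = sin \<phi> * (cos \<phi> * n2$2 - sin \<phi> * n2$1)"
      unfolding \<beta>_def by (simp only: algebra_simps)
    also have "\<dots> = 0" using h by simp
    finally show ?thesis by (simp only: sin_cos_squared_add3 mult_1 right_minus_eq)
  qed
  have c2: "\<beta> * sin \<phi> = n2$2"
  proof -
    have "\<beta> * sin \<phi> - (cos \<phi> * cos \<phi> + sin \<phi> * sin \<phi>) * n2$2 = cos \<phi> * (sin \<phi> * n2$1 - cos \<phi> * n2$2)"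
      unfolding \<beta>_def by (simp only: algebra_simps)
    also have "\<dots> = 0" using h by simp
    finally show ?thesis by (simp only: sin_cos_squared_add3 mult_1 right_minus_eq)
  qed
  have "n2 = \<beta> *\<^sub>R wv \<phi>" using c1 c2 by (simp add: vec_eq_iff forall_2 wv_comp)
  then show ?thesis using n1 by blast
next
  case True
  show ?thesis
  proof (cases "n2 = 0")
    case True
    then show ?thesis using \<open>n1 = 0\<close> by (intro exI[of _ 0] exI[of _ 0] exI[of _ 0]) simp
  next
    case False
    then obtain \<phi> r where "n2 = r *\<^sub>R wv \<phi>" using polar_unit by blast
    then show ?thesis using \<open>n1 = 0\<close> by (intro exI[of _ \<phi>] exI[of _ 0] exI[of _ r]) simp
  qed
qed

definition Phi :: "(real^2 \<Rightarrow> real) \<Rightarrow> (real^2 \<Rightarrow> real^2) \<Rightarrow> (real^2 \<Rightarrow> real^2) \<Rightarrow> (real^2 \<Rightarrow> real^2)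
    \<Rightarrow> (real^2) \<times> (real \<times> (real \<times> real)) \<Rightarrow> prm" where
  "Phi E0 F0 c1 c2 z = ((1 / E0 (fst z)) *\<^sub>R (- F0 (fst z)),
      ((1 / E0 (fst z)) *\<^sub>R (fst (snd (snd z)) *\<^sub>R wv (fst (snd z)) - c1 (fst z)),
       (1 / E0 (fst z)) *\<^sub>R (snd (snd (snd z)) *\<^sub>R wv (fst (snd z)) - c2 (fst z))))"

lemma dfst: "(\<And>y. f differentiable (at y)) \<Longrightarrow> (\<lambda>z. f (fst z)) differentiable (at z)"
  by (rule differentiable_compose) (auto intro: bounded_linear_imp_differentiable bounded_linear_fst)

lemma wv_diff: "wv differentiable (at t)"
proof -
  have "(wv has_vector_derivative (- sin t *\<^sub>R axis 1 1 + cos t *\<^sub>R axis 2 1)) (at t)"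
    unfolding wv_def[abs_def] by (auto intro!: derivative_eq_intros)
  then show ?thesis by (rule differentiableI_vector)
qed

lemma Phi_diff:
  assumes E: "\<And>y. E0 differentiable (at y)" and En: "\<And>y. E0 y \<noteq> 0"
    and F: "\<And>y. F0 differentiable (at y)" and c1: "\<And>y. c1 differentiable (at y)" and c2: "\<And>y. c2 differentiable (at y)"
  shows "Phi E0 F0 c1 c2 differentiable_on UNIV"
proof -
  have lin: "(\<lambda>z::(real^2) \<times> (real \<times> (real \<times> real)). fst (snd z)) differentiable (at z)"
            "(\<lambda>z::(real^2) \<times> (real \<times> (real \<times> real)). fst (snd (snd z))) differentiable (at z)"
            "(\<lambda>z::(real^2) \<times> (real \<times> (real \<times> real)). snd (snd (snd z))) differentiable (at z)" for z
    by (auto intro!: bounded_linear_imp_differentiable bounded_linear_compose[OF bounded_linear_fst]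
        bounded_linear_compose[OF bounded_linear_snd] bounded_linear_snd)
  have w: "(\<lambda>z::(real^2) \<times> (real \<times> (real \<times> real)). wv (fst (snd z))) differentiable (at z)" for z
    by (rule differentiable_compose[OF wv_diff lin(1)])
  have e: "(\<lambda>z::(real^2) \<times> (real \<times> (real \<times> real)). 1 / E0 (fst z)) differentiable (at z)"
          "(\<lambda>z::(real^2) \<times> (real \<times> (real \<times> real)). - 1 / E0 (fst z)) differentiable (at z)" for z
  proof -
    have ez: "(\<lambda>z::(real^2) \<times> (real \<times> (real \<times> real)). E0 (fst z)) differentiable (at z)" by (rule dfst[OF E])
    show "(\<lambda>z::(real^2) \<times> (real \<times> (real \<times> real)). 1 / E0 (fst z)) differentiable (at z)"
      by (rule differentiable_divide[OF differentiable_const ez En])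
    show "(\<lambda>z::(real^2) \<times> (real \<times> (real \<times> real)). - 1 / E0 (fst z)) differentiable (at z)"
      by (rule differentiable_divide[OF differentiable_const ez En])
  qed
  show ?thesis unfolding differentiable_on_def Phi_def
    using dfst[OF F] dfst[OF c1] dfst[OF c2] e w lin
    by (auto intro!: differentiable_Pair differentiable_scaleR differentiable_diff differentiable_minus)
qed

lemma Ugood_dense: "whitney_dense Ugood"
  unfolding whitney_dense_def
proof (intro allI impI)
  fix F :: "pt \<Rightarrow> real^2" and k :: nat and \<delta> :: "pt \<Rightarrow> real"
  assume asm: "smooth_map F \<and> continuous_on UNIV \<delta> \<and> (\<forall>x. 0 < \<delta> x)"
  then have sF: "smooth_map F" and dc: "continuous_on UNIV \<delta>" and dp: "\<And>x. 0 < \<delta> x" by auto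
  have "\<forall>n. \<exists>a. a > 0 \<and> (\<forall>p\<in>Kc n. a * W k n p \<le> \<delta> p / 4 * (1/2)^n)"
    using exists_a[OF dc dp] by blast
  then obtain a where a: "\<And>n. a n > 0" "\<And>n p. p \<in> Kc n \<Longrightarrow> a n * W k n p \<le> \<delta> p / 4 * (1/2)^n"
    by metis
  define E0 where "E0 = (\<lambda>x. Esum a (x, 0))"
  define F0 where "F0 = (\<lambda>x. F (x, 0))"
  define \<Phi> where "\<Phi> = Phi E0 F0 (col F 1) (col F 2)"
  have E0pos: "E0 x > 0" for x unfolding E0_def by (rule Esum_pos[OF a(1)])
  have dcol: "col F j differentiable (at y)" for j y
    unfolding col_def[abs_def] by (rule smooth_slice_diff[OF smooth_map_pD[OF sF]]) (simp add: basis_v)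
  have E0ne': "Esum a (y, 0) \<noteq> 0" for y using E0pos[of y] unfolding E0_def by simp
  have "\<Phi> differentiable_on UNIV" unfolding \<Phi>_def
    by (rule Phi_diff) (use E0ne' dcol in \<open>auto simp: E0_def F0_def intro!: smooth_slice_diff smooth_Esum sF\<close>)
  then have neg: "negligible (range \<Phi>)"
    by (intro negligible_differentiable_image_lowdim) simp_all
  have "\<not> ball (0::prm) 1 \<subseteq> range \<Phi>"
  proof
    assume "ball 0 1 \<subseteq> range \<Phi>"
    then have "negligible (ball (0::prm) 1)" using negligible_subset[OF neg] by blast
    then show False using open_not_negligible[of "ball (0::prm) 1"] by simp
  qed
  then obtain \<theta> where th: "\<theta> \<in> ball 0 1" "\<theta> \<notin> range \<Phi>" by blast
  have nth: "norm \<theta> < 1" using th(1) by simp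
  have n1: "norm (fst \<theta>) \<le> 1" using norm_fst_le[of "fst \<theta>" "snd \<theta>"] nth by simp
  have n2': "norm (snd \<theta>) \<le> 1" using norm_snd_le[of "snd \<theta>" "fst \<theta>"] nth by simp
  have n2: "norm (fst (snd \<theta>)) \<le> 1" using norm_fst_le[of "fst (snd \<theta>)" "snd (snd \<theta>)"] n2' by simp
  have n3: "norm (snd (snd \<theta>)) \<le> 1" using norm_snd_le[of "snd (snd \<theta>)" "fst (snd \<theta>)"] n2' by simp
  define G where "G = (\<lambda>p. F p + Pt a \<theta> p)"
  have sG: "smooth_map G" unfolding G_def by (intro smooth_add sF smooth_Pt)
  have inN: "G \<in> whitney_nbhd F k \<delta>"
    unfolding whitney_nbhd_def
  proof (intro CollectI conjI sG allI impI)
    fix us :: "pt list" and x :: pt assume us: "set us \<subseteq> Basis \<and> length us \<le> k"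
    have "pD G us x - pD F us x = pD (Pt a \<theta>) us x"
      unfolding G_def pD_add[OF sF smooth_Pt conjunct1[OF us]] by simp
    moreover have "norm (pD (Pt a \<theta>) us x) < \<delta> x"
      by (rule Pt_bound[OF a dp]) (use us n1 n2 n3 in \<open>auto simp: Lk_def\<close>)
    ultimately show "norm (pD G us x - pD F us x) < \<delta> x" by simp
  qed
  have colG: "col G j x = col F j x + E0 x *\<^sub>R mcol \<theta> j" for j x
  proof -
    have b: "set [(0::real^2, axis j 1 :: real^2)] \<subseteq> Basis" using basis_v by simp
    have "col G j x = pD F [(0, axis j 1)] (x, 0) + pD (Pt a \<theta>) [(0, axis j 1)] (x, 0)"
      unfolding col_def G_def pD_add[OF sF smooth_Pt b] by simp
    then show ?thesis unfolding col_Pt E0_def col_def .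
  qed
  have gG: "goodQ G" unfolding goodQ_def
  proof (intro allI impI notI)
    fix x assume G0: "G (x, 0) = 0" and dz: "detF G x = 0"
    from dz obtain \<phi> \<alpha> \<beta> where ab: "col G 1 x = \<alpha> *\<^sub>R wv \<phi>" "col G 2 x = \<beta> *\<^sub>R wv \<phi>"
      unfolding detF_def using polar_dep by blast
    have E0ne: "E0 x \<noteq> 0" using E0pos[of x] by simp
    have "F0 x + E0 x *\<^sub>R fst \<theta> = 0" using G0 unfolding G_def F0_def Pt_at0 E0_def .
    then have "E0 x *\<^sub>R fst \<theta> = - F0 x" by (simp add: eq_neg_iff_add_eq_0 add.commute)
    then have "(1 / E0 x) *\<^sub>R (E0 x *\<^sub>R fst \<theta>) = (1 / E0 x) *\<^sub>R (- F0 x)" by simp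
    then have t1: "fst \<theta> = (1 / E0 x) *\<^sub>R (- F0 x)" using E0ne by simp
    have t2: "fst (snd \<theta>) = (1 / E0 x) *\<^sub>R (\<alpha> *\<^sub>R wv \<phi> - col F 1 x)"
      using colG[of 1 x] ab(1) E0ne unfolding mcol_def by (simp add: algebra_simps)
    have t3: "snd (snd \<theta>) = (1 / E0 x) *\<^sub>R (\<beta> *\<^sub>R wv \<phi> - col F 2 x)"
      using colG[of 2 x] ab(2) E0ne unfolding mcol_def by (simp add: algebra_simps)
    have "\<theta> = \<Phi> (x, \<phi>, \<alpha>, \<beta>)" unfolding \<Phi>_def Phi_def using t1 t2 t3 by (simp add: prod_eq_iff)
    then show False using th(2) by blast
  qed
  have "G \<in> Ugood" unfolding Ugood_def using sG gG by simp
  then show "whitney_nbhd F k \<delta> \<inter> Ugood \<noteq> {}" using inN by blast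
qed

theorem proposition3:
  shows "generic (\<lambda>F :: implicit_system. locally_bounded_derivatives F \<longrightarrow>
           (\<forall>p. folding_critical F p \<longrightarrow> p \<notin> zero_section) \<and>
           (\<forall>p. folding_critical F p \<longrightarrow>
              (\<exists>S. open S \<and> p \<in> S \<and> S \<inter> zero_section = {})))"
  unfolding generic_def
proof (intro exI[of _ Ugood] conjI Ugood_open Ugood_dense ballI)
  fix F :: implicit_system assume F: "F \<in> Ugood"
  then have sm: "smooth_map F" and g: "goodQ F" unfolding Ugood_def by auto
  have A: "\<forall>p. folding_critical F p \<longrightarrow> p \<notin> zero_section" using good_no_crit[OF sm g] by blast
  have o: "open {q::(real^2) \<times> (real^2). snd q \<noteq> 0}"
    by (intro open_Collect_neq continuous_intros)
  have B: "\<forall>p. folding_critical F p \<longrightarrow> (\<exists>S. open S \<and> p \<in> S \<and> S \<inter> zero_section = {})"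
  proof (intro allI impI)
    fix p assume "folding_critical F p"
    then have "p \<notin> zero_section" using A by blast
    then show "\<exists>S. open S \<and> p \<in> S \<and> S \<inter> zero_section = {}"
      using o by (intro exI[of _ "{q. snd q \<noteq> 0}"]) (auto simp: zero_section_def)
  qed
  show "locally_bounded_derivatives F \<longrightarrow>
           (\<forall>p. folding_critical F p \<longrightarrow> p \<notin> zero_section) \<and>
           (\<forall>p. folding_critical F p \<longrightarrow>
              (\<exists>S. open S \<and> p \<in> S \<and> S \<inter> zero_section = {}))" using A B by blast
qed

end
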